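(* Let $\mathcal{G}$ be a connected undirected graph with $n$ nodes and $m$ edges and incidence matrix $B\in\mathbb{R}^{n\times m}$, let $p\ge 1$, $E=\begin{bmatrix} I_{p}\\ \mathbf{0}_{(n-p)\times p}\end{bmatrix}$, $d\in\mathbb{R}^n$, $Q=\operatorname{diag}(q_1,\dots,q_p)$ with all $q_i>0$, $r\in\mathbb{R}^p$, $s\in\mathbb{R}$, and $C(u)=\frac12 u^TQu+r^Tu+s$. Consider the optimization problem $$\min_{u\in\mathbb{R}^p,\ \lambda\in\mathbb{R}^m} C(u)\quad\text{subject to}\quad \mathbf{0}=-B\lambda+Eu-d.$$ Its solution (in the variable $u$) is given by $\overline u=Q^{-1}(\kappa-r)$, where $$\kappa=E^T\frac{\mathbb{1}_n\mathbb{1}_n^T}{\mathbb{1}_p^TQ^{-1}\mathbb{1}_p}\,(d+EQ^{-1}r).$$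
   Context: $\mathbb{1}_k$ denotes the all-ones vector of length $k$. The incidence matrix $B=(b_{ik})$ is obtained by arbitrarily orienting each edge and setting $b_{ik}=+1$ if node $i$ is the positive end of edge $k$, $-1$ if it is the negative end, and $0$ otherwise. *)

theory Defs
  imports "Jordan_Normal_Form.Matrix"
begin

text \<open>An undirected graph on nodes 0..n-1 with m edges; edge k has endpoints
  ends k = (a,b), which also fixes an (arbitrary) orientation: a is the positive end,
  b the negative end.\<close>

definition simple_graph :: "nat \<Rightarrow> nat \<Rightarrow> (nat \<Rightarrow> nat \<times> nat) \<Rightarrow> bool" where
  "simple_graph n m ends \<longleftrightarrow>
     (\<forall>k<m. fst (ends k) < n \<and> snd (ends k) < n \<and> fst (ends k) \<noteq> snd (ends k)) \<and>
     (\<forall>k<m. \<forall>l<m. k \<noteq> l \<longrightarrow> {fst (ends k), snd (ends k)} \<noteq> {fst (ends l), snd (ends l)})"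

definition adj_rel :: "nat \<Rightarrow> (nat \<Rightarrow> nat \<times> nat) \<Rightarrow> (nat \<times> nat) set" where
  "adj_rel m ends = {(a, b). \<exists>k<m. ends k = (a, b) \<or> ends k = (b, a)}"

definition connected_graph :: "nat \<Rightarrow> nat \<Rightarrow> (nat \<Rightarrow> nat \<times> nat) \<Rightarrow> bool" where
  "connected_graph n m ends \<longleftrightarrow> n \<ge> 1 \<and>
     (\<forall>i<n. \<forall>j<n. (i, j) \<in> (adj_rel m ends)\<^sup>*)"

definition incidence_mat :: "nat \<Rightarrow> nat \<Rightarrow> (nat \<Rightarrow> nat \<times> nat) \<Rightarrow> real mat" where
  "incidence_mat n m ends = mat n m (\<lambda>(i, k).
      if i = fst (ends k) then 1 else if i = snd (ends k) then -1 else 0)"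

definition ones_vec :: "nat \<Rightarrow> real vec" where
  "ones_vec k = vec k (\<lambda>_. 1)"

definition E_mat :: "nat \<Rightarrow> nat \<Rightarrow> real mat" where
  "E_mat n p = (1\<^sub>m p) @\<^sub>r (0\<^sub>m (n - p) p)"

definition cost :: "real mat \<Rightarrow> real vec \<Rightarrow> real \<Rightarrow> real vec \<Rightarrow> real" where
  "cost Q r s u = 1/2 * (u \<bullet> (Q *\<^sub>v u)) + r \<bullet> u + s"

definition feasible :: "real mat \<Rightarrow> real mat \<Rightarrow> real vec \<Rightarrow> real vec \<Rightarrow> real vec \<Rightarrow> bool" where
  "feasible B E d u lam \<longleftrightarrow> 0\<^sub>v (dim_row B) = - (B *\<^sub>v lam) + E *\<^sub>v u - d"

definition kappa :: "nat \<Rightarrow> nat \<Rightarrow> real mat \<Rightarrow> real vec \<Rightarrow> real vec \<Rightarrow> real vec" where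
  "kappa n p Qinv d r = transpose_mat (E_mat n p) *\<^sub>v
      ((1 / (ones_vec p \<bullet> (Qinv *\<^sub>v ones_vec p))) \<cdot>\<^sub>m mat n n (\<lambda>_. 1)
        *\<^sub>v (d + E_mat n p *\<^sub>v (Qinv *\<^sub>v r)))"

end

theory Submission imports Defs begin

definition inR :: "real mat \<Rightarrow> nat \<Rightarrow> real vec \<Rightarrow> bool" where
  "inR B m v \<longleftrightarrow> (\<exists>lam\<in>carrier_vec m. B *\<^sub>v lam = v)"

lemma inR_add: assumes B: "B \<in> carrier_mat n m" and "inR B m v" "inR B m w" shows "inR B m (v + w)"
proof -
  from assms(2) obtain l1 where l1: "l1 \<in> carrier_vec m" "B *\<^sub>v l1 = v" unfolding inR_def by (elim bexE)
  from assms(3) obtain l2 where l2: "l2 \<in> carrier_vec m" "B *\<^sub>v l2 = w" unfolding inR_def by (elim bexE)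
  have "B *\<^sub>v (l1 + l2) = B *\<^sub>v l1 + B *\<^sub>v l2" by (rule mult_add_distrib_mat_vec[OF B l1(1) l2(1)])
  then have "B *\<^sub>v (l1 + l2) = v + w" by (simp only: l1(2) l2(2))
  moreover have "l1 + l2 \<in> carrier_vec m" using l1(1) l2(1) by (rule add_carrier_vec)
  ultimately show ?thesis unfolding inR_def by blast
qed

lemma inR_smult: assumes B: "B \<in> carrier_mat n m" and "inR B m v" shows "inR B m (c \<cdot>\<^sub>v v)"
proof -
  from assms(2) obtain l1 where l1: "l1 \<in> carrier_vec m" "B *\<^sub>v l1 = v" unfolding inR_def by (elim bexE)
  have "B *\<^sub>v (c \<cdot>\<^sub>v l1) = c \<cdot>\<^sub>v (B *\<^sub>v l1)" by (rule mult_mat_vec[OF B l1(1)])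
  then have "B *\<^sub>v (c \<cdot>\<^sub>v l1) = c \<cdot>\<^sub>v v" by (simp only: l1(2))
  moreover have "c \<cdot>\<^sub>v l1 \<in> carrier_vec m" using l1(1) by (rule smult_carrier_vec[THEN iffD2])
  ultimately show ?thesis unfolding inR_def by blast
qed

lemma inR_zero: assumes "B \<in> carrier_mat n m" shows "inR B m (0\<^sub>v n)"
proof -
  have "B *\<^sub>v 0\<^sub>v m = 0\<^sub>v n" using assms by (intro eq_vecI) (auto simp: scalar_prod_def)
  then show ?thesis unfolding inR_def by (intro bexI[of _ "0\<^sub>v m"]) auto
qed

lemma B_carrier: "incidence_mat n m ends \<in> carrier_mat n m"
  unfolding incidence_mat_def by auto

lemma B_unit:
  assumes g: "simple_graph n m ends" and k: "k < m"
  shows "incidence_mat n m ends *\<^sub>v unit_vec m k = unit_vec n (fst (ends k)) - unit_vec n (snd (ends k))"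
proof (rule eq_vecI)
  have e: "fst (ends k) < n" "snd (ends k) < n" "fst (ends k) \<noteq> snd (ends k)"
    using g k unfolding simple_graph_def by auto
  fix i assume "i < dim_vec (unit_vec n (fst (ends k)) - unit_vec n (snd (ends k)) :: real vec)"
  then have i: "i < n" by simp
  have "(incidence_mat n m ends *\<^sub>v unit_vec m k) $ i = row (incidence_mat n m ends) i \<bullet> unit_vec m k"
    using i by (simp add: incidence_mat_def)
  also have "\<dots> = incidence_mat n m ends $$ (i, k)"
    using i k by (simp add: incidence_mat_def)
  also have "\<dots> = (unit_vec n (fst (ends k)) - unit_vec n (snd (ends k))) $ i"
    using i k e by (simp add: incidence_mat_def)
  finally show "(incidence_mat n m ends *\<^sub>v unit_vec m k) $ i = (unit_vec n (fst (ends k)) - unit_vec n (snd (ends k))) $ i" .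
qed (simp add: incidence_mat_def)

lemma B_colsum:
  assumes g: "simple_graph n m ends" and lam: "lam \<in> carrier_vec m"
  shows "(\<Sum>i<n. (incidence_mat n m ends *\<^sub>v lam) $ i) = 0"
proof -
  have "(\<Sum>i<n. (incidence_mat n m ends *\<^sub>v lam) $ i)
      = (\<Sum>i<n. \<Sum>k<m. (if i = fst (ends k) then 1 else if i = snd (ends k) then -1 else 0) * lam $ k)"
    using lam by (auto simp: incidence_mat_def scalar_prod_def row_def lessThan_atLeast0 intro!: sum.cong)
  also have "\<dots> = (\<Sum>k<m. \<Sum>i<n. (if i = fst (ends k) then 1 else if i = snd (ends k) then -1 else 0) * lam $ k)"
    by (rule sum.swap)
  also have "\<dots> = 0"
  proof (rule sum.neutral, intro ballI)
    fix k assume k: "k \<in> {..<m}"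
    have e: "fst (ends k) < n" "snd (ends k) < n" "fst (ends k) \<noteq> snd (ends k)"
      using g k unfolding simple_graph_def by auto
    have "(\<Sum>i<n. (if i = fst (ends k) then 1 else if i = snd (ends k) then -1 else 0) * lam $ k)
       = (\<Sum>i<n. (if i = fst (ends k) then lam $ k else 0) - (if i = snd (ends k) then lam $ k else 0))"
      using e by (intro sum.cong) auto
    also have "\<dots> = 0" using e by (simp add: sum_subtractf)
    finally show "(\<Sum>i<n. (if i = fst (ends k) then 1 else if i = snd (ends k) then -1 else 0) * lam $ k) = 0" .
  qed
  finally show ?thesis .
qed


lemma path_inR:
  assumes g: "simple_graph n m ends" and path: "(i, j) \<in> (adj_rel m ends)\<^sup>*" and i: "i < n"
  shows "inR (incidence_mat n m ends) m (unit_vec n i - unit_vec n j)"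
  using path
proof (induction rule: rtrancl_induct)
  case base
  have "unit_vec n i - unit_vec n i = (0\<^sub>v n :: real vec)" by (rule eq_vecI) auto
  then show ?case using inR_zero[OF B_carrier] by metis
next
  case (step j k)
  obtain e where e: "e < m" "ends e = (j, k) \<or> ends e = (k, j)"
    using step(2) unfolding adj_rel_def by auto
  have jk: "j < n" "k < n" using g e unfolding simple_graph_def by (auto elim!: disjE)
  have "inR (incidence_mat n m ends) m (unit_vec n j - unit_vec n k)"
  proof (cases "ends e = (j, k)")
    case True
    then show ?thesis using B_unit[OF g e(1)] e(1) unfolding inR_def
      by (intro bexI[of _ "unit_vec m e"]) auto
  next
    case False
    then have ee: "ends e = (k, j)" using e by auto
    have "incidence_mat n m ends *\<^sub>v ((-1) \<cdot>\<^sub>v unit_vec m e) = unit_vec n j - unit_vec n k"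
      using mult_mat_vec[OF B_carrier unit_vec_carrier] B_unit[OF g e(1)] ee e(1) jk
      by (auto intro!: eq_vecI)
    then show ?thesis unfolding inR_def using e(1) by (intro bexI[of _ "(-1) \<cdot>\<^sub>v unit_vec m e"]) auto
  qed
  from inR_add[OF B_carrier step(3) this]
  have "inR (incidence_mat n m ends) m ((unit_vec n i - unit_vec n j) + (unit_vec n j - unit_vec n k))" .
  moreover have "(unit_vec n i - unit_vec n j) + (unit_vec n j - unit_vec n k) = (unit_vec n i - unit_vec n k :: real vec)"
    by (auto intro!: eq_vecI)
  ultimately show ?case by simp
qed

lemma zero_sum_inR:
  assumes g: "simple_graph n m ends" and c: "connected_graph n m ends"
    and x: "x \<in> carrier_vec n" and s: "(\<Sum>i<n. x $ i) = 0"
  shows "inR (incidence_mat n m ends) m x"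
proof -
  have n1: "n \<ge> 1" using c unfolding connected_graph_def by auto
  have "\<forall>x \<in> carrier_vec n. (\<Sum>i<n. x $ i) = 0 \<longrightarrow> (\<forall>i<n. i \<noteq> 0 \<and> i \<ge> k \<longrightarrow> x $ i = 0)
        \<longrightarrow> inR (incidence_mat n m ends) m x" for k
  proof (induction k)
    case 0
    show ?case
    proof (intro ballI impI)
      fix x :: "real vec" assume x: "x \<in> carrier_vec n" and s: "(\<Sum>i<n. x $ i) = 0"
        and z: "\<forall>i<n. i \<noteq> 0 \<and> i \<ge> 0 \<longrightarrow> x $ i = 0"
      have "(\<Sum>i<n. x $ i) = (\<Sum>i\<in>{0}. x $ i)"
        using z n1 by (intro sum.mono_neutral_right) auto
      then have "x $ 0 = 0" using s by simp
      then have "x = 0\<^sub>v n" using x z by (auto intro!: eq_vecI)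
      then show "inR (incidence_mat n m ends) m x" using inR_zero[OF B_carrier] by simp
    qed
  next
    case (Suc k)
    show ?case
    proof (intro ballI impI)
      fix x :: "real vec" assume x: "x \<in> carrier_vec n" and s: "(\<Sum>i<n. x $ i) = 0"
        and z: "\<forall>i<n. i \<noteq> 0 \<and> i \<ge> Suc k \<longrightarrow> x $ i = 0"
      show "inR (incidence_mat n m ends) m x"
      proof (cases "0 < k \<and> k < n")
        case False
        have "\<forall>i<n. i \<noteq> 0 \<and> i \<ge> k \<longrightarrow> x $ i = 0"
        proof (intro allI impI)
          fix i assume i: "i < n" "i \<noteq> 0 \<and> i \<ge> k"
          show "x $ i = 0"
          proof (cases "i = k")
            case True then show ?thesis using i False by simp
          next
            case False then show ?thesis using i z by simp
          qed
        qed
        then show ?thesis using Suc.IH x s by blast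
      next
        case True
        define y where "y = x - x $ k \<cdot>\<^sub>v (unit_vec n k - unit_vec n 0)"
        have y: "y \<in> carrier_vec n" using x unfolding y_def by auto
        have yi: "i < n \<Longrightarrow> y $ i = x $ i - x $ k * ((if i = k then 1 else 0) - (if i = 0 then 1 else 0))" for i
          using x True unfolding y_def by auto
        have "(\<Sum>i<n. y $ i) = (\<Sum>i<n. x $ i - x $ k * ((if i = k then 1 else 0) - (if i = 0 then 1 else 0)))"
          using yi by (intro sum.cong) auto
        also have "\<dots> = 0" using s True n1
          by (simp add: sum_subtractf sum_distrib_left[symmetric] sum.delta')
        finally have ys: "(\<Sum>i<n. y $ i) = 0" .
        have yz: "\<forall>i<n. i \<noteq> 0 \<and> i \<ge> k \<longrightarrow> y $ i = 0"
        proof (intro allI impI)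
          fix i assume i: "i < n" "i \<noteq> 0 \<and> i \<ge> k"
          show "y $ i = 0"
          proof (cases "i = k")
            case True then show ?thesis using yi[OF i(1)] i by simp
          next
            case False then show ?thesis using i z yi[OF i(1)] by simp
          qed
        qed
        have iy: "inR (incidence_mat n m ends) m y" using Suc.IH y ys yz by blast
        have "(k, 0) \<in> (adj_rel m ends)\<^sup>*" using c True n1 unfolding connected_graph_def by auto
        from inR_smult[OF B_carrier path_inR[OF g this]] True
        have "inR (incidence_mat n m ends) m (x $ k \<cdot>\<^sub>v (unit_vec n k - unit_vec n 0))" by blast
        from inR_add[OF B_carrier iy this]
        have "inR (incidence_mat n m ends) m (y + x $ k \<cdot>\<^sub>v (unit_vec n k - unit_vec n 0))" .
        moreover have "y + x $ k \<cdot>\<^sub>v (unit_vec n k - unit_vec n 0) = x"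
          using x unfolding y_def by (auto intro!: eq_vecI simp: unit_vec_def)
        ultimately show ?thesis by simp
      qed
    qed
  qed
  from this[of n] x s show ?thesis by auto
qed


lemma E_entries: "p \<le> n \<Longrightarrow> i < n \<Longrightarrow> j < p \<Longrightarrow> E_mat n p $$ (i, j) = (if i = j then 1 else 0)"
  unfolding E_mat_def append_rows_def by (auto simp: index_mat_four_block)

lemma E_dims: "p \<le> n \<Longrightarrow> E_mat n p \<in> carrier_mat n p"
  unfolding E_mat_def by (metis carrier_append_rows le_add_diff_inverse one_carrier_mat zero_carrier_mat)

lemma sum_if_less: "(p::nat) \<le> n \<Longrightarrow> (\<Sum>j<n. if j < p then f j else 0) = (\<Sum>j<p. (f j :: real))"
proof -
  assume pn: "p \<le> n"
  have "(\<Sum>j<n. if j < p then f j else 0) = (\<Sum>j<p. if j < p then f j else 0)"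
  proof (rule sum.mono_neutral_right)
    show "{..<p} \<subseteq> {..<n}" using pn by auto
  qed auto
  also have "\<dots> = (\<Sum>j<p. f j)" by (intro sum.cong) auto
  finally show ?thesis .
qed

lemma E_mult: assumes "p \<le> n" "u \<in> carrier_vec p"
  shows "E_mat n p *\<^sub>v u = vec n (\<lambda>i. if i < p then u $ i else 0)"
proof (rule eq_vecI)
  fix i assume "i < dim_vec (vec n (\<lambda>i. if i < p then u $ i else 0))"
  then have i: "i < n" by simp
  have "(E_mat n p *\<^sub>v u) $ i = (\<Sum>j<p. E_mat n p $$ (i, j) * u $ j)"
    using E_dims[OF assms(1)] assms i by (auto simp: scalar_prod_def row_def lessThan_atLeast0)
  also have "\<dots> = (\<Sum>j<p. if j = i then u $ j else 0)"
    using E_entries[OF assms(1) i] by (intro sum.cong) auto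
  also have "\<dots> = (if i < p then u $ i else 0)" by (simp add: sum.delta')
  finally show "(E_mat n p *\<^sub>v u) $ i = vec n (\<lambda>i. if i < p then u $ i else 0) $ i" using i by simp
qed (use E_dims[OF assms(1)] in auto)

lemma ET_mult: assumes "p \<le> n" "y \<in> carrier_vec n"
  shows "transpose_mat (E_mat n p) *\<^sub>v y = vec p (\<lambda>i. y $ i)"
proof (rule eq_vecI)
  fix i assume "i < dim_vec (vec p (\<lambda>i. y $ i))"
  then have i: "i < p" by simp
  have "(transpose_mat (E_mat n p) *\<^sub>v y) $ i = (\<Sum>j<n. E_mat n p $$ (j, i) * y $ j)"
    using E_dims[OF assms(1)] assms i by (auto simp: scalar_prod_def row_def lessThan_atLeast0)
  also have "\<dots> = (\<Sum>j<n. if j = i then y $ j else 0)"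
    using E_entries[OF assms(1) _ i] by (intro sum.cong) auto
  also have "\<dots> = y $ i" using i assms(1) by (simp add: sum.delta')
  finally show "(transpose_mat (E_mat n p) *\<^sub>v y) $ i = vec p (\<lambda>i. y $ i) $ i" using i by simp
qed (use E_dims[OF assms(1)] in auto)

lemma diag_mult: assumes "u \<in> carrier_vec p"
  shows "mat_diag p f *\<^sub>v u = vec p (\<lambda>i. f i * u $ i)"
proof (rule eq_vecI)
  fix i assume "i < dim_vec (vec p (\<lambda>i. f i * u $ i))"
  then have i: "i < p" by simp
  have "(mat_diag p f *\<^sub>v u) $ i = (\<Sum>j<p. (if i = j then f j else 0) * u $ j)"
    using assms i by (auto simp: mat_diag_def scalar_prod_def row_def lessThan_atLeast0)
  also have "\<dots> = (\<Sum>j<p. if i = j then f j * u $ j else 0)" by (intro sum.cong) auto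
  also have "\<dots> = f i * u $ i" using i by (simp add: sum.delta)
  finally show "(mat_diag p f *\<^sub>v u) $ i = vec p (\<lambda>i. f i * u $ i) $ i" using i by simp
qed (simp_all add: mat_diag_def)

lemma ones_mult: assumes "(x :: real vec) \<in> carrier_vec n"
  shows "(c \<cdot>\<^sub>m mat n n (\<lambda>_. 1)) *\<^sub>v x = vec n (\<lambda>i. c * (\<Sum>j<n. x $ j))"
  using assms by (auto intro!: eq_vecI simp: scalar_prod_def row_def lessThan_atLeast0 sum_distrib_left)

lemma cost_eq: assumes "u \<in> carrier_vec p" "r \<in> carrier_vec p"
  shows "cost (mat_diag p q) r s u = (\<Sum>i<p. q i / 2 * (u $ i)^2 + r $ i * u $ i) + s"
proof -
  have "u \<bullet> (mat_diag p q *\<^sub>v u) = (\<Sum>i<p. q i * (u $ i)^2)"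
    using assms by (simp add: diag_mult scalar_prod_def lessThan_atLeast0 power2_eq_square mult.commute mult.left_commute)
  moreover have "r \<bullet> u = (\<Sum>i<p. r $ i * u $ i)"
    using assms by (simp add: scalar_prod_def lessThan_atLeast0)
  ultimately show ?thesis
    by (simp add: cost_def sum.distrib sum_distrib_left sum_divide_distrib)
qed

lemma feasible_iff:
  assumes g: "simple_graph n m ends" and c: "connected_graph n m ends" and pn: "p \<le> n"
    and d: "d \<in> carrier_vec n" and u: "u \<in> carrier_vec p"
  shows "(\<exists>lam\<in>carrier_vec m. feasible (incidence_mat n m ends) (E_mat n p) d u lam)
     \<longleftrightarrow> (\<Sum>i<p. u $ i) = (\<Sum>i<n. d $ i)"
proof -
  let ?B = "incidence_mat n m ends"
  define x where "x = E_mat n p *\<^sub>v u - d"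
  have x: "x \<in> carrier_vec n" unfolding x_def
    by (rule minus_carrier_vec[OF mult_mat_vec_carrier[OF E_dims[OF pn] u] d])
  have xi: "i < n \<Longrightarrow> x $ i = (if i < p then u $ i else 0) - d $ i" for i
    using d E_mult[OF pn u] unfolding x_def by auto
  have sx: "(\<Sum>i<n. x $ i) = (\<Sum>i<p. u $ i) - (\<Sum>i<n. d $ i)"
    using xi sum_if_less[OF pn, of "\<lambda>i. u $ i"] by (simp add: sum_subtractf)
  have fe: "lam \<in> carrier_vec m \<Longrightarrow> feasible ?B (E_mat n p) d u lam \<longleftrightarrow> ?B *\<^sub>v lam = x" for lam
    using d E_dims[OF pn] B_carrier[of n m ends] xi
    unfolding feasible_def x_def by (auto simp: vec_eq_iff)
  show ?thesis
  proof
    assume "\<exists>lam\<in>carrier_vec m. feasible ?B (E_mat n p) d u lam"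
    then obtain lam where "lam \<in> carrier_vec m" "?B *\<^sub>v lam = x" using fe by blast
    then have "(\<Sum>i<n. x $ i) = 0" using B_colsum[OF g] by metis
    then show "(\<Sum>i<p. u $ i) = (\<Sum>i<n. d $ i)" using sx by simp
  next
    assume "(\<Sum>i<p. u $ i) = (\<Sum>i<n. d $ i)"
    then have "inR ?B m x" using zero_sum_inR[OF g c x] sx by simp
    then show "\<exists>lam\<in>carrier_vec m. feasible ?B (E_mat n p) d u lam" using fe unfolding inR_def by blast
  qed
qed


theorem lemma3:
  fixes n m p :: nat and ends :: "nat \<Rightarrow> nat \<times> nat"
    and d :: "real vec" and q :: "nat \<Rightarrow> real" and r :: "real vec" and s :: real
  assumes graph: "simple_graph n m ends" and conn: "connected_graph n m ends"
    and p1: "p \<ge> 1" and pn: "p \<le> n"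
    and d: "d \<in> carrier_vec n" and r: "r \<in> carrier_vec p"
    and qpos: "\<forall>i<p. q i > 0"
  defines "B \<equiv> incidence_mat n m ends"
    and "E \<equiv> E_mat n p"
    and "Q \<equiv> mat_diag p q"
    and "ubar \<equiv> mat_diag p (\<lambda>i. 1 / q i) *\<^sub>v (kappa n p (mat_diag p (\<lambda>i. 1 / q i)) d r - r)"
  shows "(\<exists>lam \<in> carrier_vec m. feasible B E d ubar lam)
       \<and> (\<forall>u \<in> carrier_vec p. \<forall>lam \<in> carrier_vec m.
            feasible B E d u lam \<longrightarrow> cost Q r s ubar \<le> cost Q r s u)
       \<and> (\<forall>u \<in> carrier_vec p. \<forall>lam \<in> carrier_vec m.
            feasible B E d u lam \<and>
            (\<forall>u' \<in> carrier_vec p. \<forall>lam' \<in> carrier_vec m.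
               feasible B E d u' lam' \<longrightarrow> cost Q r s u \<le> cost Q r s u')
            \<longrightarrow> u = ubar)"
proof -
  define S where "S = (\<Sum>i<p. 1 / q i)"
  define Dd where "Dd = (\<Sum>i<n. d $ i)"
  define Rr where "Rr = (\<Sum>i<p. r $ i / q i)"
  define mu where "mu = (Dd + Rr) / S"
  have Spos: "S > 0" unfolding S_def using p1 qpos
    by (intro sum_pos) (auto simp: lessThan_empty_iff)
  have Qir: "mat_diag p (\<lambda>i. 1 / q i) *\<^sub>v r = vec p (\<lambda>i. r $ i / q i)"
    using diag_mult[OF r] by simp
  have dot: "ones_vec p \<bullet> (mat_diag p (\<lambda>i. 1 / q i) *\<^sub>v ones_vec p) = S"
    unfolding S_def ones_vec_def
    by (subst diag_mult) (auto simp: scalar_prod_def lessThan_atLeast0)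
  define w where "w = d + E_mat n p *\<^sub>v (mat_diag p (\<lambda>i. 1 / q i) *\<^sub>v r)"
  have wc: "w \<in> carrier_vec n" unfolding w_def
    by (rule add_carrier_vec[OF d mult_mat_vec_carrier[OF E_dims[OF pn] mult_mat_vec_carrier[OF mat_diag_dim r]]])
  have wi: "i < n \<Longrightarrow> w $ i = d $ i + (if i < p then r $ i / q i else 0)" for i
    unfolding w_def Qir using d E_mult[OF pn, of "vec p (\<lambda>i. r $ i / q i)"] by auto
  have ws: "(\<Sum>i<n. w $ i) = Dd + Rr"
    using wi sum_if_less[OF pn, of "\<lambda>i. r $ i / q i"] unfolding Dd_def Rr_def
    by (simp add: sum.distrib)
  have kap: "kappa n p (mat_diag p (\<lambda>i. 1 / q i)) d r = vec p (\<lambda>i. mu)"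
    unfolding kappa_def dot w_def[symmetric] ones_mult[OF wc] ws mu_def
    using ET_mult[OF pn] pn by (auto intro!: eq_vecI)
  have ub: "ubar = vec p (\<lambda>i. (mu - r $ i) / q i)"
    unfolding ubar_def kap using r by (subst diag_mult) auto
  have ubc: "ubar \<in> carrier_vec p" unfolding ub by simp
  have ubs: "(\<Sum>i<p. ubar $ i) = Dd"
  proof -
    have "(\<Sum>i<p. ubar $ i) = (\<Sum>i<p. mu * (1 / q i) - r $ i / q i)"
      unfolding ub by (intro sum.cong) (auto simp: diff_divide_distrib)
    also have "\<dots> = mu * S - Rr" unfolding S_def Rr_def by (simp add: sum_subtractf sum_distrib_left)
    also have "\<dots> = Dd" unfolding mu_def using Spos by simp
    finally show ?thesis .
  qed
  have feas: "u \<in> carrier_vec p \<Longrightarrow> (\<exists>lam\<in>carrier_vec m. feasible B E d u lam) \<longleftrightarrow> (\<Sum>i<p. u $ i) = Dd" for u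
    unfolding B_def E_def Dd_def using feasible_iff[OF graph conn pn d] by blast
  have key: "u \<in> carrier_vec p \<Longrightarrow> (\<Sum>i<p. u $ i) = Dd \<Longrightarrow>
      cost Q r s u = cost Q r s ubar + (\<Sum>i<p. q i / 2 * (u $ i - ubar $ i)^2)" for u
  proof -
    assume u: "u \<in> carrier_vec p" and us: "(\<Sum>i<p. u $ i) = Dd"
    have trm: "q i / 2 * (u $ i)^2 + r $ i * u $ i =
        (q i / 2 * (ubar $ i)^2 + r $ i * ubar $ i) + q i / 2 * (u $ i - ubar $ i)^2 + mu * (u $ i - ubar $ i)"
      if i: "i < p" for i
    proof -
      have qi: "q i > 0" using qpos i by auto
      have "ubar $ i = (mu - r $ i) / q i" unfolding ub using i by simp
      then have m: "mu = q i * ubar $ i + r $ i" using qi by (simp add: field_simps)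
      show ?thesis unfolding m by (simp add: power2_eq_square algebra_simps)
    qed
    have "cost Q r s u = (\<Sum>i<p. q i / 2 * (u $ i)^2 + r $ i * u $ i) + s"
      unfolding Q_def by (rule cost_eq[OF u r])
    also have "\<dots> = (\<Sum>i<p. (q i / 2 * (ubar $ i)^2 + r $ i * ubar $ i) + q i / 2 * (u $ i - ubar $ i)^2 + mu * (u $ i - ubar $ i)) + s"
    proof -
      have "(\<Sum>i<p. q i / 2 * (u $ i)^2 + r $ i * u $ i) = (\<Sum>i<p. (q i / 2 * (ubar $ i)^2 + r $ i * ubar $ i) + q i / 2 * (u $ i - ubar $ i)^2 + mu * (u $ i - ubar $ i))"
        by (rule sum.cong[OF refl]) (rule trm, simp)
      then show ?thesis by (rule arg_cong[where f="\<lambda>t. t + s"])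
    qed
    also have "\<dots> = ((\<Sum>i<p. q i / 2 * (ubar $ i)^2 + r $ i * ubar $ i) + s) + (\<Sum>i<p. q i / 2 * (u $ i - ubar $ i)^2) + mu * ((\<Sum>i<p. u $ i) - (\<Sum>i<p. ubar $ i))"
      by (simp only: sum.distrib sum_subtractf sum_distrib_left right_diff_distrib add_ac)
    also have "(\<Sum>i<p. q i / 2 * (ubar $ i)^2 + r $ i * ubar $ i) + s = cost Q r s ubar"
      unfolding Q_def by (rule cost_eq[OF ubc r, symmetric])
    finally show ?thesis using us ubs by simp
  qed
  have nonneg: "(\<Sum>i<p. q i / 2 * (u $ i - ubar $ i)^2) \<ge> 0" for u
    using qpos by (intro sum_nonneg) auto
  show ?thesis
  proof (intro conjI ballI impI)
    show "\<exists>lam\<in>carrier_vec m. feasible B E d ubar lam" using feas[OF ubc] ubs by simp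
  next
    fix u lam assume u: "u \<in> carrier_vec p" and "lam \<in> carrier_vec m" and "feasible B E d u lam"
    then have "(\<Sum>i<p. u $ i) = Dd" using feas[OF u] by blast
    then show "cost Q r s ubar \<le> cost Q r s u" using key[OF u] nonneg[of u] by simp
  next
    fix u lam assume u: "u \<in> carrier_vec p" and lam: "lam \<in> carrier_vec m" and
      h: "feasible B E d u lam \<and> (\<forall>u'\<in>carrier_vec p. \<forall>lam'\<in>carrier_vec m.
          feasible B E d u' lam' \<longrightarrow> cost Q r s u \<le> cost Q r s u')"
    then have us: "(\<Sum>i<p. u $ i) = Dd" using feas[OF u] by blast
    obtain lb where "lb \<in> carrier_vec m" "feasible B E d ubar lb" using feas[OF ubc] ubs by blast
    then have "cost Q r s u \<le> cost Q r s ubar" using h ubc by blast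
    then have z: "(\<Sum>i<p. q i / 2 * (u $ i - ubar $ i)^2) = 0"
      using key[OF u us] nonneg[of u] by simp
    have "\<forall>i\<in>{..<p}. q i / 2 * (u $ i - ubar $ i)^2 = 0"
      using z qpos by (subst sum_nonneg_eq_0_iff[symmetric]) auto
    note zz = this
    have "\<forall>i<p. u $ i = ubar $ i"
    proof (intro allI impI)
      fix i assume i: "i < p"
      then have a: "q i / 2 * (u $ i - ubar $ i)^2 = 0" using zz by simp
      have "q i > 0" using qpos i by simp
      then have "(u $ i - ubar $ i)^2 = 0" using a by simp
      then show "u $ i = ubar $ i" by simp
    qed
    then show "u = ubar" using u ubc by (auto intro!: eq_vecI)
  qed
qed
end
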